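(* Let $\bar x:[0,\infty)\to(0,1]$ be the solution of $\bar x'(t)=-\bar x^2(t)-(1-\bar x^2(t))\bar x(t)$, $\bar x(0)=1$, and consider the system $$\bar s_2'=\bar x^2+(1-\bar x^2)\bar s_2^2,\qquad \bar s_3'=3\bar x^2+3(1-\bar x^2)\bar s_2\bar s_3,\qquad \bar s_4'=7\bar x^2+(1-\bar x^2)\bigl(4\bar s_2\bar s_4+3\bar s_3^2\bigr),$$ with $\bar s_2(0)=\bar s_3(0)=\bar s_4(0)=1$. Let $t_c\in(0,\infty)$ be the explosion time of $\bar s_2$, i.e. $\bar s_2$ is defined on $[0,t_c)$ and $\bar s_2(t)\to+\infty$ as $t\uparrow t_c$. Then $\bar s_2,\bar s_3,\bar s_4$ are uniquely defined on $[0,t_c)$, and as $t\uparrow t_c$ there exist positive constants $\alpha,\beta$ such that $$\bar s_2(t)\sim\frac{\alpha}{t_c-t},\qquad \bar s_3(t)\sim\beta\,\bar s_2(t)^3\sim\frac{\beta\alpha^3}{(t_c-t)^3},\qquad \bar s_4(t)\sim 3\beta^2\bar s_2(t)^5\sim\frac{3\beta^2\alpha^5}{(t_c-t)^5}.$$ More precisely, $\bar s_k(t)=\gamma_k(t_c-t)^{-(2k-3)}\bigl(1+O(t_c-t)\bigr)$ for $k=2,3,4$, with $\gamma_2=\alpha$, $\gamma_3=\beta\alpha^3$, $\gamma_4=3\beta^2\alpha^5$. Here $\alpha=(1-\bar x^2(t_c))^{-1}$ and $\beta=g(t_c)$, where $g$ is defined as follows: let $f$ be the solution of $f'=-\bar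 x^2 f^2-(1-\bar x^2)$, $f(0)=1$ (so that $f=1/\bar s_2$ on $[0,t_c)$ and $f(t_c)=0$), and let $g$ be the solution of $g'=3\bar x^2 f^3-3\bar x^2 f g$, $g(0)=1$, i.e. $g(t)=e^{-G(t)}+3e^{-G(t)}\int_0^t e^{G(u)}\bar x^2(u)f^3(u)\,du$ with $G(t)=3\int_0^t\bar x^2(u)f(u)\,du$.
   Context: It is known (and used as part of the setting) that $\bar x$ exists and is positive for all $t\ge0$ and that $\bar s_2$ explodes at a finite time $t_c>0$. The notation $a(t)\sim b(t)$ means $a(t)/b(t)\to1$. *)

theory Defs
  imports "HOL-Analysis.Analysis" "HOL-Library.Landau_Symbols"
begin

definition xbar_ode :: "(real \<Rightarrow> real) \<Rightarrow> bool" where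
  "xbar_ode x \<longleftrightarrow> x 0 = 1 \<and>
     (\<forall>t\<ge>0. (x has_real_derivative (- ((x t)^2) - (1 - (x t)^2) * x t)) (at t within (atLeast 0)))"

definition s_system_sol ::
  "(real \<Rightarrow> real) \<Rightarrow> real \<Rightarrow> (real \<Rightarrow> real) \<Rightarrow> (real \<Rightarrow> real) \<Rightarrow> (real \<Rightarrow> real) \<Rightarrow> bool" where
  "s_system_sol x tc s2 s3 s4 \<longleftrightarrow> s2 0 = 1 \<and> s3 0 = 1 \<and> s4 0 = 1 \<and>
     (\<forall>t\<in>{0..<tc}.
        (s2 has_real_derivative ((x t)^2 + (1 - (x t)^2) * (s2 t)^2)) (at t within {0..<tc}) \<and>
        (s3 has_real_derivative (3 * (x t)^2 + 3 * (1 - (x t)^2) * s2 t * s3 t)) (at t within {0..<tc}) \<and>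
        (s4 has_real_derivative (7 * (x t)^2 + (1 - (x t)^2) * (4 * s2 t * s4 t + 3 * (s3 t)^2)))
           (at t within {0..<tc}))"

definition s2_sol :: "(real \<Rightarrow> real) \<Rightarrow> real \<Rightarrow> (real \<Rightarrow> real) \<Rightarrow> bool" where
  "s2_sol x tc s2 \<longleftrightarrow> s2 0 = 1 \<and>
     (\<forall>t\<in>{0..<tc}.
        (s2 has_real_derivative ((x t)^2 + (1 - (x t)^2) * (s2 t)^2)) (at t within {0..<tc}))"

definition f_sol :: "(real \<Rightarrow> real) \<Rightarrow> real \<Rightarrow> (real \<Rightarrow> real) \<Rightarrow> bool" where
  "f_sol x tc f \<longleftrightarrow> f 0 = 1 \<and>
     (\<forall>t\<in>{0..tc}.
        (f has_real_derivative (- ((x t)^2 * (f t)^2) - (1 - (x t)^2))) (at t within {0..tc}))"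

definition g_sol :: "(real \<Rightarrow> real) \<Rightarrow> (real \<Rightarrow> real) \<Rightarrow> real \<Rightarrow> (real \<Rightarrow> real) \<Rightarrow> bool" where
  "g_sol x f tc g \<longleftrightarrow> g 0 = 1 \<and>
     (\<forall>t\<in>{0..tc}.
        (g has_real_derivative (3 * (x t)^2 * (f t)^3 - 3 * (x t)^2 * f t * g t)) (at t within {0..tc}))"

end

theory Submission
  imports Defs
begin


lemma mvt_within:
  fixes f f' :: "real \<Rightarrow> real"
  assumes ab: "a < b" and sub: "{a..b} \<subseteq> S"
    and d: "\<forall>t\<in>{a..b}. (f has_real_derivative f' t) (at t within S)"
  shows "\<exists>z. a < z \<and> z < b \<and> f b - f a = (b - a) * f' z"
proof -
  have d2: "(f has_real_derivative f' t) (at t within {a..b})" if "t \<in> {a..b}" for t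
  proof -
    have "(f has_real_derivative f' t) (at t within S)" using d that by blast
    then show ?thesis by (rule DERIV_subset) (rule sub)
  qed
  have c: "continuous_on {a..b} f" by (rule DERIV_continuous_on[OF d2])
  have dat: "(f has_real_derivative f' t) (at t)" if "a < t" "t < b" for t
  proof -
    have "(f has_real_derivative f' t) (at t within {a..b})" using d2 that by simp
    moreover have "at t within {a..b} = at t" by (rule at_within_Icc_at) (use that in auto)
    ultimately show ?thesis by simp
  qed
  obtain l z where z: "a < z" "z < b" "DERIV f z :> l" "f b - f a = (b - a) * l"
  proof -
    have "\<And>t. a < t \<Longrightarrow> t < b \<Longrightarrow> f differentiable (at t)"
      using dat real_differentiable_def by blast
    from MVT[OF ab c this] show ?thesis using that by blast
  qed
  have "l = f' z" using DERIV_unique[OF z(3) dat[OF z(1,2)]] .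
  then show ?thesis using z by blast
qed

lemma deriv_bound:
  fixes f f' :: "real \<Rightarrow> real"
  assumes ab: "a \<le> b" and sub: "{a..b} \<subseteq> S"
    and d: "\<forall>t\<in>{a..b}. (f has_real_derivative f' t) (at t within S)"
    and B: "\<forall>t\<in>{a..b}. \<bar>f' t\<bar> \<le> B"
  shows "\<bar>f b - f a\<bar> \<le> B * (b - a)"
proof (cases "a = b")
  case True then show ?thesis by simp
next
  case False
  then have "a < b" using ab by simp
  from mvt_within[OF this sub d] obtain z where z: "a < z" "z < b" "f b - f a = (b - a) * f' z" by blast
  have "\<bar>f b - f a\<bar> = (b - a) * \<bar>f' z\<bar>" using z ab by (simp add: abs_mult)
  also have "\<dots> \<le> (b - a) * B" using B z by (intro mult_left_mono) auto
  finally show ?thesis by (simp add: mult.commute)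
qed

lemma deriv_nonpos:
  fixes f f' :: "real \<Rightarrow> real"
  assumes ab: "a \<le> b" and sub: "{a..b} \<subseteq> S"
    and d: "\<forall>t\<in>{a..b}. (f has_real_derivative f' t) (at t within S)"
    and B: "\<forall>t\<in>{a..b}. f' t \<le> 0"
  shows "f b \<le> f a"
proof (cases "a = b")
  case True then show ?thesis by simp
next
  case False
  then have "a < b" using ab by simp
  from mvt_within[OF this sub d] obtain z where z: "a < z" "z < b" "f b - f a = (b - a) * f' z" by blast
  have "(b - a) * f' z \<le> 0" using B z by (intro mult_nonneg_nonpos) auto
  then show ?thesis using z by simp
qed

lemma compact_bound:
  fixes h :: "real \<Rightarrow> real"
  assumes "continuous_on {a..b} h"
  shows "\<exists>B. \<forall>t\<in>{a..b}. \<bar>h t\<bar> \<le> B"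
proof -
  have "bounded (h ` {a..b})" by (rule compact_imp_bounded[OF compact_continuous_image[OF assms compact_Icc]])
  then obtain B where "\<forall>y\<in>h ` {a..b}. norm y \<le> B" by (auto simp: bounded_iff)
  then show ?thesis by auto
qed

lemma gronwall0:
  fixes d d' :: "real \<Rightarrow> real"
  assumes sub: "{0..T} \<subseteq> S"
    and dd: "\<forall>t\<in>{0..T}. (d has_real_derivative d' t) (at t within S)"
    and M: "\<forall>t\<in>{0..T}. \<bar>d' t\<bar> \<le> M * \<bar>d t\<bar>"
    and d0: "d 0 = 0"
  shows "\<forall>t\<in>{0..T}. d t = 0"
proof
  fix t assume t: "t \<in> {0..T}"
  define D where "D = (\<lambda>s. (d s)^2 * exp (-(2*M) * s))"
  define D' where "D' = (\<lambda>s. 2 * d s * d' s * exp (-(2*M) * s) + (d s)^2 * (exp (-(2*M) * s) * (-(2*M))))"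
  have DD: "\<forall>s\<in>{0..t}. (D has_real_derivative D' s) (at s within S)"
  proof
    fix s assume s: "s \<in> {0..t}"
    then have "s \<in> {0..T}" using t by auto
    then have "(d has_real_derivative d' s) (at s within S)" using dd by auto
    then show "(D has_real_derivative D' s) (at s within S)"
      unfolding D_def D'_def
      by (auto intro!: derivative_eq_intros simp: power2_eq_square)
  qed
  have Dn: "\<forall>s\<in>{0..t}. D' s \<le> 0"
  proof
    fix s assume s: "s \<in> {0..t}"
    then have "s \<in> {0..T}" using t by auto
    then have m: "\<bar>d' s\<bar> \<le> M * \<bar>d s\<bar>" using M by auto
    have "d s * d' s \<le> M * (d s)^2"
    proof -
      have "d s * d' s \<le> \<bar>d s\<bar> * \<bar>d' s\<bar>" by (metis abs_ge_self abs_mult)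
      also have "\<dots> \<le> \<bar>d s\<bar> * (M * \<bar>d s\<bar>)" by (rule mult_left_mono[OF m]) simp
      also have "\<dots> = M * (d s)^2" by (simp add: power2_eq_square)
      finally show ?thesis .
    qed
    then have "2 * d s * d' s - 2 * M * (d s)^2 \<le> 0" by simp
    then have "(2 * d s * d' s - 2 * M * (d s)^2) * exp (-(2*M) * s) \<le> 0"
      by (simp add: mult_nonpos_nonneg)
    then show "D' s \<le> 0" unfolding D'_def by (simp add: algebra_simps)
  qed
  have "{0..t} \<subseteq> S" using t sub by auto
  then have "D t \<le> D 0" using deriv_nonpos[OF _ _ DD Dn] t by auto
  then have "D t \<le> 0" using d0 by (simp add: D_def)
  then have "(d t)^2 \<le> 0" unfolding D_def
    by (simp add: mult_le_0_iff)
  then show "d t = 0" by simp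
qed

lemma lin_uniq:
  fixes y1 y2 D1 D2 c :: "real \<Rightarrow> real"
  assumes sub: "{0..T} \<subseteq> S"
    and d1: "\<forall>t\<in>{0..T}. (y1 has_real_derivative D1 t) (at t within S)"
    and d2: "\<forall>t\<in>{0..T}. (y2 has_real_derivative D2 t) (at t within S)"
    and e: "\<forall>t\<in>{0..T}. D1 t - D2 t = c t * (y1 t - y2 t)"
    and c: "continuous_on {0..T} c"
    and i: "y1 0 = y2 0"
  shows "\<forall>t\<in>{0..T}. y1 t = y2 t"
proof -
  obtain M where M: "\<forall>t\<in>{0..T}. \<bar>c t\<bar> \<le> M" using compact_bound[OF c] by blast
  have dd: "\<forall>t\<in>{0..T}. ((\<lambda>s. y1 s - y2 s) has_real_derivative (D1 t - D2 t)) (at t within S)"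
    using d1 d2 by (auto intro!: derivative_eq_intros)
  have b: "\<forall>t\<in>{0..T}. \<bar>D1 t - D2 t\<bar> \<le> M * \<bar>y1 t - y2 t\<bar>"
    using e M by (auto simp: abs_mult intro!: mult_right_mono)
  from gronwall0[OF sub dd b] i show ?thesis by auto
qed

lemma lin_exists:
  fixes a b :: "real \<Rightarrow> real" and y0 :: real
  assumes ca: "continuous_on {0..T} a" and cb: "continuous_on {0..T} b"
  defines "A \<equiv> (\<lambda>t. integral {0..t} a)"
  defines "y \<equiv> (\<lambda>t. exp (A t) * (y0 + integral {0..t} (\<lambda>u. exp (- A u) * b u)))"
  shows "y 0 = y0" "\<forall>t\<in>{0..T}. (y has_real_derivative (a t * y t + b t)) (at t within {0..T})"
proof -
  show "y 0 = y0" by (simp add: y_def A_def)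
  have dA: "\<forall>t\<in>{0..T}. (A has_real_derivative a t) (at t within {0..T})"
    unfolding A_def using integral_has_real_derivative[OF ca] by blast
  have cA: "continuous_on {0..T} A" using DERIV_continuous_on dA by blast
  have ci: "continuous_on {0..T} (\<lambda>u. exp (- A u) * b u)"
    by (intro continuous_intros cA cb)
  have dI: "\<forall>t\<in>{0..T}. ((\<lambda>t. integral {0..t} (\<lambda>u. exp (- A u) * b u)) has_real_derivative (exp (- A t) * b t)) (at t within {0..T})"
    using integral_has_real_derivative[OF ci] by blast
  show "\<forall>t\<in>{0..T}. (y has_real_derivative (a t * y t + b t)) (at t within {0..T})"
  proof
    fix t assume t: "t \<in> {0..T}"
    have "(y has_real_derivative (exp (A t) * a t * (y0 + integral {0..t} (\<lambda>u. exp (- A u) * b u)) + exp (A t) * (exp (- A t) * b t))) (at t within {0..T})"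
      unfolding y_def using dA dI t
      by (auto intro!: derivative_eq_intros)
    moreover have "exp (A t) * a t * (y0 + integral {0..t} (\<lambda>u. exp (- A u) * b u)) + exp (A t) * (exp (- A t) * b t) = a t * y t + b t"
      by (simp add: y_def exp_minus field_simps)
    ultimately show "(y has_real_derivative (a t * y t + b t)) (at t within {0..T})" by simp
  qed
qed



definition near1 :: "real filter \<Rightarrow> (real \<Rightarrow> real) \<Rightarrow> (real \<Rightarrow> real) \<Rightarrow> bool" where
  "near1 F h r \<longleftrightarrow> (\<lambda>t. r t - 1) \<in> O[F](h)"

lemma near1_tendsto:
  assumes h: "(h \<longlongrightarrow> 0) F" and n: "near1 F h r"
  shows "(r \<longlongrightarrow> 1) F"
proof -
  have ho: "h \<in> o[F](\<lambda>_. 1)" by (rule smalloI_tendsto) (use h in auto)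
  have "(\<lambda>t. r t - 1) \<in> o[F](\<lambda>_. 1)"
    by (rule landau_o.big_small_trans[OF n[unfolded near1_def] ho])
  then have "((\<lambda>t. (r t - 1) / 1) \<longlongrightarrow> 0) F" by (rule smalloD_tendsto)
  then have "((\<lambda>t. (r t - 1) + 1) \<longlongrightarrow> 0 + 1) F" by (intro tendsto_add) auto
  then show ?thesis by simp
qed

lemma bounded_of_tendsto:
  fixes s :: "real \<Rightarrow> real"
  assumes "(s \<longlongrightarrow> c) F"
  shows "s \<in> O[F](\<lambda>_. 1)"
  by (rule bigoI_tendsto[where c=c]) (use assms in auto)

lemma near1_mult:
  assumes h: "(h \<longlongrightarrow> 0) F" and r: "near1 F h r" and s: "near1 F h s"
  shows "near1 F h (\<lambda>t. r t * s t)"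
proof -
  have sb: "s \<in> O[F](\<lambda>_. 1)" by (rule bounded_of_tendsto[OF near1_tendsto[OF h s]])
  have "(\<lambda>t. (r t - 1) * s t) \<in> O[F](\<lambda>t. h t * 1)"
    by (rule landau_o.big.mult[OF r[unfolded near1_def] sb])
  then have a: "(\<lambda>t. (r t - 1) * s t) \<in> O[F](h)" by simp
  have "(\<lambda>t. (r t - 1) * s t + (s t - 1)) \<in> O[F](h)"
    by (rule sum_in_bigo(1)[OF a s[unfolded near1_def]])
  moreover have "(\<lambda>t. (r t - 1) * s t + (s t - 1)) = (\<lambda>t. r t * s t - 1)"
    by (auto simp: algebra_simps)
  ultimately show ?thesis unfolding near1_def by simp
qed

lemma near1_inverse:
  assumes h: "(h \<longlongrightarrow> 0) F" and r: "near1 F h r"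
  shows "near1 F h (\<lambda>t. inverse (r t))"
proof -
  have rt: "(r \<longlongrightarrow> 1) F" by (rule near1_tendsto[OF h r])
  have ib: "(\<lambda>t. inverse (r t)) \<in> O[F](\<lambda>_. 1)"
    by (rule bounded_of_tendsto) (rule tendsto_inverse[OF rt], simp)
  have ev: "eventually (\<lambda>t. r t \<noteq> 0) F"
    using tendsto_imp_eventually_ne[OF rt] by simp
  have "(\<lambda>t. - ((r t - 1) * inverse (r t))) \<in> O[F](\<lambda>t. h t * 1)"
    using landau_o.big.mult[OF r[unfolded near1_def] ib] by simp
  then have a: "(\<lambda>t. - ((r t - 1) * inverse (r t))) \<in> O[F](h)" by simp
  have "eventually (\<lambda>t. - ((r t - 1) * inverse (r t)) = inverse (r t) - 1) F"
    using ev by eventually_elim (simp add: field_simps)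
  from landau_o.big.in_cong[OF this] a show ?thesis unfolding near1_def by simp
qed

lemma near1_power:
  assumes h: "(h \<longlongrightarrow> 0) F" and r: "near1 F h r"
  shows "near1 F h (\<lambda>t. r t ^ n)"
proof (induction n)
  case 0 then show ?case by (simp add: near1_def)
next
  case (Suc n)
  have "near1 F h (\<lambda>t. r t * r t ^ n)" by (rule near1_mult[OF h r Suc])
  then show ?case by simp
qed

lemma near1_add:
  assumes r: "near1 F h r" and e: "e \<in> O[F](h)"
  shows "near1 F h (\<lambda>t. r t + e t)"
proof -
  have "(\<lambda>t. (r t - 1) + e t) \<in> O[F](h)" by (rule sum_in_bigo(1)[OF r[unfolded near1_def] e])
  then show ?thesis unfolding near1_def by (simp add: algebra_simps)
qed

lemma near1_cong:
  assumes r: "near1 F h r" and ev: "eventually (\<lambda>t. r t = s t) F"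
  shows "near1 F h s"
proof -
  have "eventually (\<lambda>t. r t - 1 = s t - 1) F" using ev by eventually_elim simp
  from landau_o.big.in_cong[OF this] r show ?thesis unfolding near1_def by simp
qed



locale sett =
  fixes x s2 f g :: "real \<Rightarrow> real" and tc :: real
  assumes x_ode: "xbar_ode x"
    and x_range: "\<forall>t\<ge>0. 0 < x t \<and> x t \<le> 1"
    and tc_pos: "0 < tc"
    and s2: "s2_sol x tc s2"
    and s2_explodes: "filterlim s2 at_top (at_left tc)"
    and f: "f_sol x tc f"
    and g: "g_sol x f tc g"
begin

definition "a0 = 1 - (x tc)^2"

lemma xd: "\<forall>t\<in>{0..}. (x has_real_derivative (- ((x t)^2) - (1 - (x t)^2) * x t)) (at t within {0..})"
  using x_ode unfolding xbar_ode_def atLeast_def by auto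

lemma x0: "x 0 = 1" using x_ode unfolding xbar_ode_def by auto

lemma xc0: "continuous_on {0..} x"
  by (rule DERIV_continuous_on) (use xd in blast)

lemma xc: "continuous_on {0..tc} x"
  by (rule continuous_on_subset[OF xc0]) auto

lemma xpos: "t \<ge> 0 \<Longrightarrow> 0 < x t" and xle1: "t \<ge> 0 \<Longrightarrow> x t \<le> 1"
  using x_range by auto

lemma x_tc: "x tc < 1"
proof -
  have sub: "{0..tc} \<subseteq> {0..}" by auto
  have dd: "\<forall>t\<in>{0..tc}. (x has_real_derivative (- ((x t)^2) - (1 - (x t)^2) * x t)) (at t within {0..})"
    using xd by simp
  obtain z where z: "0 < z" "z < tc" "x tc - x 0 = (tc - 0) * (- ((x z)^2) - (1 - (x z)^2) * x z)"
    using mvt_within[OF tc_pos sub dd] by blast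
  have "0 < x z" "x z \<le> 1" using xpos xle1 z by auto
  then have "(x z)^2 \<le> 1" by (simp add: power_le_one)
  then have "- ((x z)^2) - (1 - (x z)^2) * x z < 0"
  proof -
    have "0 < (x z)^2" using \<open>0 < x z\<close> by simp
    moreover have "0 \<le> (1 - (x z)^2) * x z" using \<open>(x z)^2 \<le> 1\<close> \<open>0 < x z\<close> by simp
    ultimately show ?thesis by linarith
  qed
  then have "(tc - 0) * (- ((x z)^2) - (1 - (x z)^2) * x z) < 0"
    using tc_pos by (simp add: mult_pos_neg)
  then show ?thesis using z x0 by simp
qed

lemma a0_pos: "0 < a0"
proof -
  have "0 < x tc" using xpos tc_pos by simp
  then have "(x tc)^2 < 1" using x_tc by (simp add: power_less_one_iff abs_less_iff)
  then show ?thesis unfolding a0_def by simp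
qed

lemma xlip: "s \<in> {0..tc} \<Longrightarrow> \<bar>x tc - x s\<bar> \<le> 2 * (tc - s)"
proof -
  assume s: "s \<in> {0..tc}"
  have b: "\<forall>t\<in>{s..tc}. \<bar>- ((x t)^2) - (1 - (x t)^2) * x t\<bar> \<le> 2"
  proof
    fix t assume t: "t \<in> {s..tc}"
    then have "0 < x t" "x t \<le> 1" using xpos xle1 s by auto
    then have "(x t)^2 \<le> 1" "0 \<le> (x t)^2" by (auto simp: power_le_one)
    moreover have "(1 - (x t)^2) * x t \<le> 1 * 1" using \<open>0 < x t\<close> \<open>x t \<le> 1\<close> \<open>0 \<le> (x t)^2\<close>
      by (intro mult_mono) auto
    moreover have "0 \<le> (1 - (x t)^2) * x t" using \<open>0 < x t\<close> \<open>(x t)^2 \<le> 1\<close> by simp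
    ultimately show "\<bar>- ((x t)^2) - (1 - (x t)^2) * x t\<bar> \<le> 2"
      unfolding abs_le_iff by linarith
  qed
  have sub: "{s..tc} \<subseteq> {0..}" using s by auto
  have dd: "\<forall>t\<in>{s..tc}. (x has_real_derivative (- ((x t)^2) - (1 - (x t)^2) * x t)) (at t within {0..})"
    using xd sub by blast
  have "s \<le> tc" using s by simp
  from deriv_bound[OF this sub dd b] show ?thesis by simp
qed

lemma xsq_lip: "s \<in> {0..tc} \<Longrightarrow> \<bar>(x s)^2 - (x tc)^2\<bar> \<le> 4 * (tc - s)"
proof -
  assume s: "s \<in> {0..tc}"
  have "\<bar>(x s)^2 - (x tc)^2\<bar> = \<bar>x tc - x s\<bar> * \<bar>x s + x tc\<bar>"
    by (simp add: power2_eq_square abs_mult[symmetric] algebra_simps)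
  also have "\<dots> \<le> (2 * (tc - s)) * 2"
  proof (rule mult_mono)
    show "\<bar>x tc - x s\<bar> \<le> 2 * (tc - s)" by (rule xlip[OF s])
    have "0 < x s" "x s \<le> 1" "0 < x tc" "x tc \<le> 1" using xpos xle1 s tc_pos by auto
    then show "\<bar>x s + x tc\<bar> \<le> 2" by simp
    show "0 \<le> 2 * (tc - s)" using s by simp
  qed simp
  finally show ?thesis by simp
qed

lemma s2d: "\<forall>t\<in>{0..<tc}. (s2 has_real_derivative ((x t)^2 + (1 - (x t)^2) * (s2 t)^2)) (at t within {0..<tc})"
  using s2 unfolding s2_sol_def by auto

lemma s2_0: "s2 0 = 1" using s2 unfolding s2_sol_def by auto

lemma s2_ge1: "t \<in> {0..<tc} \<Longrightarrow> 1 \<le> s2 t"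
proof -
  assume t: "t \<in> {0..<tc}"
  show ?thesis
  proof (cases "t = 0")
    case True then show ?thesis using s2_0 by simp
  next
    case False
    then have "0 < t" using t by auto
    have sub: "{0..t} \<subseteq> {0..<tc}" using t by auto
    have dd: "\<forall>u\<in>{0..t}. (s2 has_real_derivative ((x u)^2 + (1 - (x u)^2) * (s2 u)^2)) (at u within {0..<tc})"
    proof
      fix u assume "u \<in> {0..t}"
      then have "u \<in> {0..<tc}" using sub by blast
      then show "(s2 has_real_derivative ((x u)^2 + (1 - (x u)^2) * (s2 u)^2)) (at u within {0..<tc})"
        by (rule bspec[OF s2d])
    qed
    obtain z where
      z: "0 < z" "z < t" "s2 t - s2 0 = (t - 0) * ((x z)^2 + (1 - (x z)^2) * (s2 z)^2)"
      using mvt_within[OF \<open>0 < t\<close> sub dd] by blast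
    have "x z \<le> 1" "0 < x z" using xle1 xpos z by auto
    then have "(x z)^2 \<le> 1" by (simp add: power_le_one)
    then have "0 \<le> (x z)^2 + (1 - (x z)^2) * (s2 z)^2" by simp
    then have "0 \<le> t * ((x z)^2 + (1 - (x z)^2) * (s2 z)^2)" using \<open>0 < t\<close> by simp
    then show ?thesis using z s2_0 by simp
  qed
qed

lemma s2c: "continuous_on {0..<tc} s2"
  by (rule DERIV_continuous_on) (use s2d in blast)


lemma s2_ne: "t \<in> {0..<tc} \<Longrightarrow> s2 t \<noteq> 0" using s2_ge1[of t] by auto

lemma fd: "\<forall>t\<in>{0..tc}. (f has_real_derivative (- ((x t)^2 * (f t)^2) - (1 - (x t)^2))) (at t within {0..tc})"
  using f unfolding f_sol_def by auto

lemma f0: "f 0 = 1" using f unfolding f_sol_def by auto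

lemma fc: "continuous_on {0..tc} f"
  by (rule DERIV_continuous_on) (use fd in blast)

lemma f_bound: "\<exists>B. \<forall>t\<in>{0..tc}. \<bar>f t\<bar> \<le> B"
  by (rule compact_bound[OF fc])

lemma f_eq: "t \<in> {0..<tc} \<Longrightarrow> f t = 1 / s2 t"
proof -
  assume t: "t \<in> {0..<tc}"
  have sub1: "{0..t} \<subseteq> {0..tc}" and sub2: "{0..t} \<subseteq> {0..<tc}" using t by auto
  have d1: "\<forall>u\<in>{0..t}. (f has_real_derivative (- ((x u)^2 * (f u)^2) - (1 - (x u)^2))) (at u within {0..t})"
  proof
    fix u assume u: "u \<in> {0..t}"
    then have "u \<in> {0..tc}" using sub1 by blast
    then have "(f has_real_derivative (- ((x u)^2 * (f u)^2) - (1 - (x u)^2))) (at u within {0..tc})"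
      by (rule bspec[OF fd])
    then show "(f has_real_derivative (- ((x u)^2 * (f u)^2) - (1 - (x u)^2))) (at u within {0..t})"
      by (rule DERIV_subset) (rule sub1)
  qed
  have d2: "\<forall>u\<in>{0..t}. ((\<lambda>u. 1 / s2 u) has_real_derivative (- ((x u)^2 + (1 - (x u)^2) * (s2 u)^2) / (s2 u)^2)) (at u within {0..t})"
  proof
    fix u assume u: "u \<in> {0..t}"
    then have u2: "u \<in> {0..<tc}" using sub2 by blast
    then have "(s2 has_real_derivative ((x u)^2 + (1 - (x u)^2) * (s2 u)^2)) (at u within {0..<tc})"
      by (rule bspec[OF s2d])
    then have ds: "(s2 has_real_derivative ((x u)^2 + (1 - (x u)^2) * (s2 u)^2)) (at u within {0..t})"
      by (rule DERIV_subset) (rule sub2)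
    have ne: "s2 u \<noteq> 0" by (rule s2_ne[OF u2])
    show "((\<lambda>u. 1 / s2 u) has_real_derivative (- ((x u)^2 + (1 - (x u)^2) * (s2 u)^2) / (s2 u)^2)) (at u within {0..t})"
      using ds ne by (auto intro!: derivative_eq_intros simp: power2_eq_square)
  qed
  have e: "\<forall>u\<in>{0..t}. (- ((x u)^2 * (f u)^2) - (1 - (x u)^2)) - (- ((x u)^2 + (1 - (x u)^2) * (s2 u)^2) / (s2 u)^2)
      = (- ((x u)^2 * (f u + 1 / s2 u))) * (f u - 1 / s2 u)"
  proof
    fix u assume u: "u \<in> {0..t}"
    then have ne: "s2 u \<noteq> 0" using s2_ne sub2 by blast
    show "(- ((x u)^2 * (f u)^2) - (1 - (x u)^2)) - (- ((x u)^2 + (1 - (x u)^2) * (s2 u)^2) / (s2 u)^2)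
      = (- ((x u)^2 * (f u + 1 / s2 u))) * (f u - 1 / s2 u)"
      using ne by (simp add: field_simps power2_eq_square)
  qed
  have cx: "continuous_on {0..t} x" by (rule continuous_on_subset[OF xc sub1])
  have cf: "continuous_on {0..t} f" by (rule continuous_on_subset[OF fc sub1])
  have cs: "continuous_on {0..t} s2" by (rule continuous_on_subset[OF s2c sub2])
  have nz: "\<forall>u\<in>{0..t}. s2 u \<noteq> 0" using s2_ne sub2 by blast
  have cc: "continuous_on {0..t} (\<lambda>u. - ((x u)^2 * (f u + 1 / s2 u)))"
    by (intro continuous_intros cx cf cs) (use nz in auto)
  have "\<forall>u\<in>{0..t}. f u = 1 / s2 u"
    by (rule lin_uniq[OF order_refl d1 d2 e cc]) (simp add: f0 s2_0)
  then show ?thesis using t by auto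
qed

lemma f_tc: "f tc = 0"
proof -
  have "(f \<longlongrightarrow> f tc) (at tc within {0..tc})"
    using fc tc_pos unfolding continuous_on_def by auto
  then have l1: "(f \<longlongrightarrow> f tc) (at_left tc)" using at_within_Icc_at_left[OF tc_pos] by simp
  have l0: "((\<lambda>t. inverse (s2 t)) \<longlongrightarrow> 0) (at_left tc)" by (rule tendsto_inverse_0_at_top[OF s2_explodes])
  have "eventually (\<lambda>t. inverse (s2 t) = f t) (at_left tc)"
    using eventually_at_left_real[OF tc_pos]
  proof eventually_elim
    case (elim t) then show ?case using f_eq[of t] by (simp add: divide_inverse)
  qed
  from tendsto_cong[OF this, THEN iffD1, OF l0] have "(f \<longlongrightarrow> 0) (at_left tc)" .
  then show ?thesis using l1 tendsto_unique trivial_limit_at_left_real by blast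
qed

lemma f_pos: "t \<in> {0..<tc} \<Longrightarrow> 0 < f t" using f_eq[of t] s2_ge1[of t] by simp

lemma f_nn: "t \<in> {0..tc} \<Longrightarrow> 0 \<le> f t"
  using f_pos[of t] f_tc by (cases "t = tc") auto


lemma fd_sub: "{a..b} \<subseteq> {0..tc} \<Longrightarrow> \<forall>t\<in>{a..b}. (f has_real_derivative (- ((x t)^2 * (f t)^2) - (1 - (x t)^2))) (at t within {0..tc})"
  using fd by blast

lemma f_lin: "\<exists>C. \<forall>t\<in>{0..tc}. \<bar>f t\<bar> \<le> C * (tc - t)"
proof -
  obtain B where B: "\<forall>t\<in>{0..tc}. \<bar>f t\<bar> \<le> B" using f_bound by blast
  have "\<bar>f t\<bar> \<le> (B^2 + 1) * (tc - t)" if t: "t \<in> {0..tc}" for t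
  proof -
    have sub: "{t..tc} \<subseteq> {0..tc}" using t by auto
    have bd: "\<forall>u\<in>{t..tc}. \<bar>- ((x u)^2 * (f u)^2) - (1 - (x u)^2)\<bar> \<le> B^2 + 1"
    proof
      fix u assume u: "u \<in> {t..tc}"
      then have u0: "u \<in> {0..tc}" using sub by blast
      have "0 < x u" "x u \<le> 1" using xpos xle1 u0 by auto
      then have x2: "(x u)^2 \<le> 1" "0 \<le> (x u)^2" by (auto simp: power_le_one)
      have "\<bar>f u\<bar> \<le> B" using B u0 by blast
      then have "\<bar>f u\<bar>^2 \<le> B^2" by (rule power_mono) simp
      then have f2: "(f u)^2 \<le> B^2" by simp
      have "(x u)^2 * (f u)^2 \<le> 1 * B^2" using x2 f2 by (intro mult_mono) auto
      moreover have "0 \<le> (x u)^2 * (f u)^2" by simp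
      ultimately show "\<bar>- ((x u)^2 * (f u)^2) - (1 - (x u)^2)\<bar> \<le> B^2 + 1"
        using x2 unfolding abs_le_iff by linarith
    qed
    have "t \<le> tc" using t by simp
    from deriv_bound[OF this sub fd_sub[OF sub] bd] show ?thesis using f_tc by simp
  qed
  then show ?thesis by blast
qed

lemma f_quad: "\<exists>K. \<forall>t\<in>{0..tc}. \<bar>f t - a0 * (tc - t)\<bar> \<le> K * (tc - t)^2"
proof -
  obtain C where C: "\<forall>t\<in>{0..tc}. \<bar>f t\<bar> \<le> C * (tc - t)" using f_lin by blast
  define K where "K = C^2 * tc + 4"
  have "\<bar>f t - a0 * (tc - t)\<bar> \<le> K * (tc - t)^2" if t: "t \<in> {0..tc}" for t
  proof -
    have sub: "{t..tc} \<subseteq> {0..tc}" using t by auto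
    have dd: "\<forall>u\<in>{t..tc}. ((\<lambda>u. f u - a0 * (tc - u)) has_real_derivative
        ((- ((x u)^2 * (f u)^2) - (1 - (x u)^2)) + a0)) (at u within {0..tc})"
    proof
      fix u assume u: "u \<in> {t..tc}"
      then have "(f has_real_derivative (- ((x u)^2 * (f u)^2) - (1 - (x u)^2))) (at u within {0..tc})"
        using fd_sub[OF sub] by blast
      then show "((\<lambda>u. f u - a0 * (tc - u)) has_real_derivative
        ((- ((x u)^2 * (f u)^2) - (1 - (x u)^2)) + a0)) (at u within {0..tc})"
        by (auto intro!: derivative_eq_intros)
    qed
    have bd: "\<forall>u\<in>{t..tc}. \<bar>(- ((x u)^2 * (f u)^2) - (1 - (x u)^2)) + a0\<bar> \<le> K * (tc - t)"
    proof
      fix u assume u: "u \<in> {t..tc}"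
      then have u0: "u \<in> {0..tc}" using sub by blast
      have eq: "(- ((x u)^2 * (f u)^2) - (1 - (x u)^2)) + a0 = - ((x u)^2 * (f u)^2) + ((x u)^2 - (x tc)^2)"
        by (simp add: a0_def)
      have "0 < x u" "x u \<le> 1" using xpos xle1 u0 by auto
      then have x2: "(x u)^2 \<le> 1" "0 \<le> (x u)^2" by (auto simp: power_le_one)
      have fu: "\<bar>f u\<bar> \<le> C * (tc - u)" using C u0 by blast
      have "\<bar>f u\<bar>^2 \<le> (C * (tc - u))^2" by (rule power_mono[OF fu]) simp
      then have f2: "(f u)^2 \<le> C^2 * (tc - u)^2" by (simp add: power_mult_distrib)
      have "(tc - u)^2 \<le> (tc - t)^2" using u by (intro power_mono) auto
      also have "(tc - t)^2 = (tc - t) * (tc - t)" by (simp add: power2_eq_square)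
      also have "\<dots> \<le> tc * (tc - t)" using t by (intro mult_right_mono) auto
      finally have "C^2 * (tc - u)^2 \<le> C^2 * (tc * (tc - t))" by (intro mult_left_mono) auto
      with f2 have f3: "(f u)^2 \<le> C^2 * tc * (tc - t)" by simp
      have "(x u)^2 * (f u)^2 \<le> 1 * (f u)^2" using x2 by (intro mult_right_mono) auto
      with f3 have A: "\<bar>(x u)^2 * (f u)^2\<bar> \<le> C^2 * tc * (tc - t)" by simp
      have "\<bar>(x u)^2 - (x tc)^2\<bar> \<le> 4 * (tc - u)" by (rule xsq_lip[OF u0])
      also have "\<dots> \<le> 4 * (tc - t)" using u by simp
      finally have Bx: "\<bar>(x u)^2 - (x tc)^2\<bar> \<le> 4 * (tc - t)" .
      have "\<bar>- ((x u)^2 * (f u)^2) + ((x u)^2 - (x tc)^2)\<bar> \<le> C^2 * tc * (tc - t) + 4 * (tc - t)"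
        using A Bx unfolding abs_le_iff by linarith
      also have "\<dots> = K * (tc - t)" by (simp add: K_def algebra_simps)
      finally show "\<bar>(- ((x u)^2 * (f u)^2) - (1 - (x u)^2)) + a0\<bar> \<le> K * (tc - t)" using eq by simp
    qed
    have "t \<le> tc" using t by simp
    from deriv_bound[OF this sub dd bd] have "\<bar>(f tc - a0 * (tc - tc)) - (f t - a0 * (tc - t))\<bar> \<le> K * (tc - t) * (tc - t)" .
    then show ?thesis using f_tc by (simp add: power2_eq_square)
  qed
  then show ?thesis by blast
qed

lemma gd: "\<forall>t\<in>{0..tc}. (g has_real_derivative (3 * (x t)^2 * (f t)^3 - 3 * (x t)^2 * f t * g t)) (at t within {0..tc})"
  using g unfolding g_sol_def by auto

lemma g0: "g 0 = 1" using g unfolding g_sol_def by auto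

lemma gc: "continuous_on {0..tc} g"
  by (rule DERIV_continuous_on) (use gd in blast)

lemma g_pos: "0 < g tc"
proof -
  define a where "a = (\<lambda>t. - (3 * (x t)^2 * f t))"
  define b where "b = (\<lambda>t. 3 * (x t)^2 * (f t)^3)"
  have ca: "continuous_on {0..tc} a" unfolding a_def by (intro continuous_intros xc fc)
  have cb: "continuous_on {0..tc} b" unfolding b_def by (intro continuous_intros xc fc)
  define A where "A = (\<lambda>t. integral {0..t} a)"
  define y where "y = (\<lambda>t. exp (A t) * (1 + integral {0..t} (\<lambda>u. exp (- A u) * b u)))"
  have y0: "y 0 = 1" and yd: "\<forall>t\<in>{0..tc}. (y has_real_derivative (a t * y t + b t)) (at t within {0..tc})"
    using lin_exists[OF ca cb, of 1] unfolding A_def y_def by auto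
  have gd': "\<forall>t\<in>{0..tc}. (g has_real_derivative (a t * g t + b t)) (at t within {0..tc})"
  proof
    fix t assume "t \<in> {0..tc}"
    then have "(g has_real_derivative (3 * (x t)^2 * (f t)^3 - 3 * (x t)^2 * f t * g t)) (at t within {0..tc})"
      by (rule bspec[OF gd])
    moreover have "3 * (x t)^2 * (f t)^3 - 3 * (x t)^2 * f t * g t = a t * g t + b t"
      by (simp add: a_def b_def algebra_simps)
    ultimately show "(g has_real_derivative (a t * g t + b t)) (at t within {0..tc})" by simp
  qed
  have "\<forall>t\<in>{0..tc}. g t = y t"
    by (rule lin_uniq[OF order_refl gd' yd _ ca]) (auto simp: g0 y0 algebra_simps)
  then have gy: "g tc = y tc" using tc_pos by auto
  have dA: "\<forall>t\<in>{0..tc}. (A has_real_derivative a t) (at t within {0..tc})"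
    unfolding A_def using integral_has_real_derivative[OF ca] by blast
  have cA: "continuous_on {0..tc} A" by (rule DERIV_continuous_on) (use dA in blast)
  have ci: "continuous_on {0..tc} (\<lambda>u. exp (- A u) * b u)" by (intro continuous_intros cA cb)
  have "0 \<le> integral {0..tc} (\<lambda>u. exp (- A u) * b u)"
  proof (rule integral_nonneg)
    show "(\<lambda>u. exp (- A u) * b u) integrable_on {0..tc}" by (rule integrable_continuous_interval[OF ci])
    fix u assume "u \<in> {0..tc}"
    then have "0 \<le> f u" by (rule f_nn)
    then show "0 \<le> exp (- A u) * b u" unfolding b_def by simp
  qed
  then have "0 < y tc" unfolding y_def by (simp add: add_pos_nonneg)
  then show ?thesis using gy by simp
qed

lemma g_lip: "\<exists>L. \<forall>t\<in>{0..tc}. \<bar>g t - g tc\<bar> \<le> L * (tc - t)"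
proof -
  have c: "continuous_on {0..tc} (\<lambda>t. 3 * (x t)^2 * (f t)^3 - 3 * (x t)^2 * f t * g t)"
    by (intro continuous_intros xc fc gc)
  obtain L where L: "\<forall>t\<in>{0..tc}. \<bar>3 * (x t)^2 * (f t)^3 - 3 * (x t)^2 * f t * g t\<bar> \<le> L"
    using compact_bound[OF c] by blast
  have "\<bar>g t - g tc\<bar> \<le> L * (tc - t)" if t: "t \<in> {0..tc}" for t
  proof -
    have sub: "{t..tc} \<subseteq> {0..tc}" using t by auto
    have dd: "\<forall>u\<in>{t..tc}. (g has_real_derivative (3 * (x u)^2 * (f u)^3 - 3 * (x u)^2 * f u * g u)) (at u within {0..tc})"
      using gd sub by blast
    have bd: "\<forall>u\<in>{t..tc}. \<bar>3 * (x u)^2 * (f u)^3 - 3 * (x u)^2 * f u * g u\<bar> \<le> L"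
      using L sub by blast
    have "t \<le> tc" using t by simp
    from deriv_bound[OF this sub dd bd] show ?thesis by (simp add: abs_minus_commute)
  qed
  then show ?thesis by blast
qed


definition "S3 = (\<lambda>t. g t / (f t)^3)"
definition "qq = (\<lambda>t. 7 * (x t)^2 * (f t)^4 - 18 * (x t)^2 * g t * (f t)^2 + 3 * (x t)^2 * (g t)^2)"
definition "aa = (\<lambda>t. - (4 * (x t)^2 * f t))"
definition "AA = (\<lambda>t. integral {0..t} aa)"
definition "kk = (\<lambda>t. exp (AA t) * (-2 + integral {0..t} (\<lambda>u. exp (- AA u) * qq u)))"
definition "S4 = (\<lambda>t. (kk t + 3 * (g t)^2 / f t) / (f t)^4)"

lemma kk_props: "kk 0 = -2" "\<forall>t\<in>{0..tc}. (kk has_real_derivative (aa t * kk t + qq t)) (at t within {0..tc})"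
proof -
  have ca: "continuous_on {0..tc} aa" unfolding aa_def by (intro continuous_intros xc fc)
  have cb: "continuous_on {0..tc} qq" unfolding qq_def by (intro continuous_intros xc fc gc)
  show "kk 0 = -2" "\<forall>t\<in>{0..tc}. (kk has_real_derivative (aa t * kk t + qq t)) (at t within {0..tc})"
    using lin_exists[OF ca cb, of "-2"] unfolding kk_def AA_def by auto
qed

lemma kkc: "continuous_on {0..tc} kk"
  by (rule DERIV_continuous_on) (use kk_props(2) in blast)

lemma alg_S3:
  fixes X F G :: real
  assumes "F \<noteq> 0"
  shows "((3 * X^2 * F^3 - 3 * X^2 * F * G) * F^3 - G * (3 * (- (X^2 * F^2) - (1 - X^2)) * F^2)) / (F^3 * F^3)
     = 3 * X^2 + 3 * (1 - X^2) * (1 / F) * (G / F^3)"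
  using assms by (simp add: field_simps) algebra

lemma S3d: "t \<in> {0..<tc} \<Longrightarrow> (S3 has_real_derivative (3 * (x t)^2 + 3 * (1 - (x t)^2) * s2 t * S3 t)) (at t within {0..<tc})"
proof -
  assume t: "t \<in> {0..<tc}"
  have t0: "t \<in> {0..tc}" using t by auto
  have sub: "{0..<tc} \<subseteq> {0..tc}" by auto
  have df: "(f has_real_derivative (- ((x t)^2 * (f t)^2) - (1 - (x t)^2))) (at t within {0..<tc})"
    using DERIV_subset[OF bspec[OF fd t0] sub] .
  have dg: "(g has_real_derivative (3 * (x t)^2 * (f t)^3 - 3 * (x t)^2 * f t * g t)) (at t within {0..<tc})"
    using DERIV_subset[OF bspec[OF gd t0] sub] .
  have fne: "f t \<noteq> 0" using f_pos[OF t] by simp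
  have "((\<lambda>t. (f t)^3) has_real_derivative (of_nat 3 * ((- ((x t)^2 * (f t)^2) - (1 - (x t)^2)) * (f t)^(3 - Suc 0)))) (at t within {0..<tc})"
    by (rule DERIV_power[OF df])
  moreover have "of_nat 3 * ((- ((x t)^2 * (f t)^2) - (1 - (x t)^2)) * (f t)^(3 - Suc 0)) = 3 * (- ((x t)^2 * (f t)^2) - (1 - (x t)^2)) * (f t)^2"
    by simp
  ultimately have d3: "((\<lambda>t. (f t)^3) has_real_derivative (3 * (- ((x t)^2 * (f t)^2) - (1 - (x t)^2)) * (f t)^2)) (at t within {0..<tc})"
    by metis
  have "((\<lambda>t. g t / (f t)^3) has_real_derivative
     ((3 * (x t)^2 * (f t)^3 - 3 * (x t)^2 * f t * g t) * (f t)^3 - g t * (3 * (- ((x t)^2 * (f t)^2) - (1 - (x t)^2)) * (f t)^2)) / ((f t)^3 * (f t)^3))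
     (at t within {0..<tc})"
    by (rule DERIV_divide[OF dg d3]) (use fne in simp)
  then show ?thesis unfolding S3_def using alg_S3[OF fne, of "x t" "g t"] f_eq[OF t] fne by simp
qed


lemma alg_S4:
  fixes X F G K A Q S T :: real
  assumes F: "F \<noteq> 0" and A: "A = - (4 * X^2 * F)"
    and Q: "Q = 7 * X^2 * F^4 - 18 * X^2 * G * F^2 + 3 * X^2 * G^2"
    and S: "S = 1 / F" and T: "T = G / F^3"
  shows "((A * K + Q +
          (6 * ((3 * X^2 * F ^ 3 - 3 * X^2 * F * G) * G) * F -
           3 * G^2 * (- (X^2 * F^2) - (1 - X^2))) / (F * F)) * F ^ 4 -
         (K + 3 * G^2 / F) * (4 * ((- (X^2 * F^2) - (1 - X^2)) * F ^ 3))) / F ^ 8 =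
        7 * X^2 + (1 - X^2) * (4 * S * (K + 3 * G^2 / F) / F ^ 4 + 3 * T^2)"
  unfolding A Q S T using F by (simp add: field_simps) algebra

lemma S4d: "t \<in> {0..<tc} \<Longrightarrow> (S4 has_real_derivative (7 * (x t)^2 + (1 - (x t)^2) * (4 * s2 t * S4 t + 3 * (S3 t)^2))) (at t within {0..<tc})"
proof -
  assume t: "t \<in> {0..<tc}"
  have t0: "t \<in> {0..tc}" using t by auto
  have sub: "{0..<tc} \<subseteq> {0..tc}" by auto
  have df: "(f has_real_derivative (- ((x t)^2 * (f t)^2) - (1 - (x t)^2))) (at t within {0..<tc})"
    using DERIV_subset[OF bspec[OF fd t0] sub] .
  have dg: "(g has_real_derivative (3 * (x t)^2 * (f t)^3 - 3 * (x t)^2 * f t * g t)) (at t within {0..<tc})"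
    using DERIV_subset[OF bspec[OF gd t0] sub] .
  have dk: "(kk has_real_derivative (aa t * kk t + qq t)) (at t within {0..<tc})"
    using DERIV_subset[OF bspec[OF kk_props(2) t0] sub] .
  have fne: "f t \<noteq> 0" using f_pos[OF t] by simp
  show ?thesis unfolding S4_def
    using df dg dk fne apply (auto intro!: derivative_eq_intros)
    apply (rule alg_S4[OF fne])
       apply (simp_all add: aa_def qq_def S3_def f_eq[OF t])
    done
qed


lemma sys_ex: "s_system_sol x tc s2 S3 S4"
  unfolding s_system_sol_def
proof (intro conjI ballI)
  show "s2 0 = 1" by (rule s2_0)
  show "S3 0 = 1" by (simp add: S3_def f0 g0)
  show "S4 0 = 1" by (simp add: S4_def f0 g0 kk_props(1))
  fix t assume t: "t \<in> {0..<tc}"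
  show "(s2 has_real_derivative ((x t)^2 + (1 - (x t)^2) * (s2 t)^2)) (at t within {0..<tc})"
    by (rule bspec[OF s2d t])
  show "(S3 has_real_derivative (3 * (x t)^2 + 3 * (1 - (x t)^2) * s2 t * S3 t)) (at t within {0..<tc})"
    by (rule S3d[OF t])
  show "(S4 has_real_derivative (7 * (x t)^2 + (1 - (x t)^2) * (4 * s2 t * S4 t + 3 * (S3 t)^2))) (at t within {0..<tc})"
    by (rule S4d[OF t])
qed

lemma sys_uniq:
  assumes A: "s_system_sol x tc a2 a3 a4" and B: "s_system_sol x tc b2 b3 b4"
  shows "\<forall>t\<in>{0..<tc}. a2 t = b2 t \<and> a3 t = b3 t \<and> a4 t = b4 t"
proof
  fix t assume t: "t \<in> {0..<tc}"
  have sub: "{0..t} \<subseteq> {0..<tc}" using t by auto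
  have Ad: "\<forall>u\<in>{0..<tc}. (a2 has_real_derivative ((x u)^2 + (1 - (x u)^2) * (a2 u)^2)) (at u within {0..<tc}) \<and>
        (a3 has_real_derivative (3 * (x u)^2 + 3 * (1 - (x u)^2) * a2 u * a3 u)) (at u within {0..<tc}) \<and>
        (a4 has_real_derivative (7 * (x u)^2 + (1 - (x u)^2) * (4 * a2 u * a4 u + 3 * (a3 u)^2))) (at u within {0..<tc})"
    and A0: "a2 0 = 1" "a3 0 = 1" "a4 0 = 1"
    using A unfolding s_system_sol_def by auto
  have Bd: "\<forall>u\<in>{0..<tc}. (b2 has_real_derivative ((x u)^2 + (1 - (x u)^2) * (b2 u)^2)) (at u within {0..<tc}) \<and>
        (b3 has_real_derivative (3 * (x u)^2 + 3 * (1 - (x u)^2) * b2 u * b3 u)) (at u within {0..<tc}) \<and>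
        (b4 has_real_derivative (7 * (x u)^2 + (1 - (x u)^2) * (4 * b2 u * b4 u + 3 * (b3 u)^2))) (at u within {0..<tc})"
    and B0: "b2 0 = 1" "b3 0 = 1" "b4 0 = 1"
    using B unfolding s_system_sol_def by auto
  have ca2: "continuous_on {0..<tc} a2" by (rule DERIV_continuous_on) (use Ad in blast)
  have cb2: "continuous_on {0..<tc} b2" by (rule DERIV_continuous_on) (use Bd in blast)
  have ca3: "continuous_on {0..<tc} a3" by (rule DERIV_continuous_on) (use Ad in blast)
  have cx: "continuous_on {0..t} x" by (rule continuous_on_subset[OF xc0]) auto
  have ca2': "continuous_on {0..t} a2" by (rule continuous_on_subset[OF ca2 sub])
  have cb2': "continuous_on {0..t} b2" by (rule continuous_on_subset[OF cb2 sub])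
  have ca3': "continuous_on {0..t} a3" by (rule continuous_on_subset[OF ca3 sub])
  have Ad': "\<forall>u\<in>{0..t}. (a2 has_real_derivative ((x u)^2 + (1 - (x u)^2) * (a2 u)^2)) (at u within {0..<tc}) \<and>
        (a3 has_real_derivative (3 * (x u)^2 + 3 * (1 - (x u)^2) * a2 u * a3 u)) (at u within {0..<tc}) \<and>
        (a4 has_real_derivative (7 * (x u)^2 + (1 - (x u)^2) * (4 * a2 u * a4 u + 3 * (a3 u)^2))) (at u within {0..<tc})"
    using Ad sub by blast
  have Bd': "\<forall>u\<in>{0..t}. (b2 has_real_derivative ((x u)^2 + (1 - (x u)^2) * (b2 u)^2)) (at u within {0..<tc}) \<and>
        (b3 has_real_derivative (3 * (x u)^2 + 3 * (1 - (x u)^2) * b2 u * b3 u)) (at u within {0..<tc}) \<and>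
        (b4 has_real_derivative (7 * (x u)^2 + (1 - (x u)^2) * (4 * b2 u * b4 u + 3 * (b3 u)^2))) (at u within {0..<tc})"
    using Bd sub by blast
  have e2: "\<forall>u\<in>{0..t}. ((x u)^2 + (1 - (x u)^2) * (a2 u)^2) - ((x u)^2 + (1 - (x u)^2) * (b2 u)^2)
     = ((1 - (x u)^2) * (a2 u + b2 u)) * (a2 u - b2 u)"
    by (simp add: power2_eq_square algebra_simps)
  have c2: "continuous_on {0..t} (\<lambda>u. (1 - (x u)^2) * (a2 u + b2 u))"
    by (intro continuous_intros cx ca2' cb2')
  have E2: "\<forall>u\<in>{0..t}. a2 u = b2 u"
    by (rule lin_uniq[OF sub _ _ e2 c2]) (use Ad' Bd' A0 B0 in auto)
  have e3: "\<forall>u\<in>{0..t}. (3 * (x u)^2 + 3 * (1 - (x u)^2) * a2 u * a3 u) - (3 * (x u)^2 + 3 * (1 - (x u)^2) * b2 u * b3 u)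
     = (3 * (1 - (x u)^2) * a2 u) * (a3 u - b3 u)"
    using E2 by (simp add: algebra_simps)
  have c3: "continuous_on {0..t} (\<lambda>u. 3 * (1 - (x u)^2) * a2 u)"
    by (intro continuous_intros cx ca2')
  have E3: "\<forall>u\<in>{0..t}. a3 u = b3 u"
    by (rule lin_uniq[OF sub _ _ e3 c3]) (use Ad' Bd' A0 B0 in auto)
  have e4: "\<forall>u\<in>{0..t}. (7 * (x u)^2 + (1 - (x u)^2) * (4 * a2 u * a4 u + 3 * (a3 u)^2)) - (7 * (x u)^2 + (1 - (x u)^2) * (4 * b2 u * b4 u + 3 * (b3 u)^2))
     = (4 * (1 - (x u)^2) * a2 u) * (a4 u - b4 u)"
    using E2 E3 by (simp add: algebra_simps)
  have c4: "continuous_on {0..t} (\<lambda>u. 4 * (1 - (x u)^2) * a2 u)"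
    by (intro continuous_intros cx ca2')
  have E4: "\<forall>u\<in>{0..t}. a4 u = b4 u"
    by (rule lin_uniq[OF sub _ _ e4 c4]) (use Ad' Bd' A0 B0 in auto)
  show "a2 t = b2 t \<and> a3 t = b3 t \<and> a4 t = b4 t" using E2 E3 E4 t by auto
qed


lemma powi_m1: "(y::real) powi (-1) = inverse y" by (simp add: power_int_minus)
lemma powi_m3: "(y::real) powi (-3) = inverse (y^3)" by (simp add: power_int_minus)
lemma powi_m5: "(y::real) powi (-5) = inverse (y^5)" by (simp add: power_int_minus)

lemma pw1: "(a::real) * y powi (-1) = a / y" by (simp add: power_int_minus divide_inverse)
lemma pw3: "(a::real) * y powi (-3) = a / y^3" by (simp add: power_int_minus divide_inverse)
lemma pw5: "(a::real) * y powi (-5) = a / y^5" by (simp add: power_int_minus divide_inverse)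

lemma ht: "((\<lambda>t. tc - t) \<longlongrightarrow> 0) (at_left tc)"
proof -
  have "((\<lambda>t. tc - t) \<longlongrightarrow> tc - tc) (at_left tc)" by (intro tendsto_intros)
  then show ?thesis by simp
qed

lemma evF: "eventually (\<lambda>t. t \<in> {0<..<tc}) (at_left tc)"
  by (rule eventually_at_left_real[OF tc_pos])

lemma N1: "near1 (at_left tc) (\<lambda>t. tc - t) (\<lambda>t. (1 / a0) * f t / (tc - t))"
proof -
  obtain K where K: "\<forall>t\<in>{0..tc}. \<bar>f t - a0 * (tc - t)\<bar> \<le> K * (tc - t)^2" using f_quad by blast
  have "eventually (\<lambda>t. norm ((1 / a0) * f t / (tc - t) - 1) \<le> (K / a0) * norm (tc - t)) (at_left tc)"
    using evF
  proof eventually_elim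
    case (elim t)
    then have tau: "0 < tc - t" and t0: "t \<in> {0..tc}" by auto
    have a: "0 < a0" by (rule a0_pos)
    have eq: "(1 / a0) * f t / (tc - t) - 1 = (f t - a0 * (tc - t)) / (a0 * (tc - t))"
      using tau a by (simp add: field_simps)
    have "\<bar>f t - a0 * (tc - t)\<bar> / (a0 * (tc - t)) \<le> K * (tc - t)^2 / (a0 * (tc - t))"
      using K t0 tau a by (intro divide_right_mono) auto
    also have "\<dots> = (K / a0) * (tc - t)" using tau a by (simp add: power2_eq_square field_simps)
    finally show ?case using eq tau a by (simp add: abs_divide abs_mult)
  qed
  then show ?thesis unfolding near1_def by (intro bigoI)
qed

lemma Ng: "near1 (at_left tc) (\<lambda>t. tc - t) (\<lambda>t. g t / g tc)"
proof -
  obtain L where L: "\<forall>t\<in>{0..tc}. \<bar>g t - g tc\<bar> \<le> L * (tc - t)" using g_lip by blast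
  have b: "0 < g tc" by (rule g_pos)
  have "eventually (\<lambda>t. norm (g t / g tc - 1) \<le> (L / g tc) * norm (tc - t)) (at_left tc)"
    using evF
  proof eventually_elim
    case (elim t)
    then have tau: "0 < tc - t" and t0: "t \<in> {0..tc}" by auto
    have eq: "g t / g tc - 1 = (g t - g tc) / g tc" using b by (simp add: field_simps)
    have "\<bar>g t - g tc\<bar> / g tc \<le> L * (tc - t) / g tc"
      using L t0 b by (intro divide_right_mono) auto
    then show ?case using eq tau b by (simp add: abs_divide)
  qed
  then show ?thesis unfolding near1_def by (intro bigoI)
qed

lemma Ok: "(\<lambda>t. kk t * f t / (3 * (g tc)^2)) \<in> O[at_left tc](\<lambda>t. tc - t)"
proof -
  obtain C where C: "\<forall>t\<in>{0..tc}. \<bar>f t\<bar> \<le> C * (tc - t)" using f_lin by blast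
  obtain Bk where Bk: "\<forall>t\<in>{0..tc}. \<bar>kk t\<bar> \<le> Bk" using compact_bound[OF kkc] by blast
  have b: "0 < g tc" by (rule g_pos)
  have "eventually (\<lambda>t. norm (kk t * f t / (3 * (g tc)^2)) \<le> (Bk * C / (3 * (g tc)^2)) * norm (tc - t)) (at_left tc)"
    using evF
  proof eventually_elim
    case (elim t)
    then have tau: "0 < tc - t" and t0: "t \<in> {0..tc}" by auto
    have "\<bar>kk t\<bar> * \<bar>f t\<bar> \<le> Bk * (C * (tc - t))"
      using Bk C t0 by (intro mult_mono) auto
    then have "\<bar>kk t\<bar> * \<bar>f t\<bar> / (3 * (g tc)^2) \<le> Bk * (C * (tc - t)) / (3 * (g tc)^2)"
      by (intro divide_right_mono) auto
    then show ?case using tau b by (simp add: abs_divide abs_mult)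
  qed
  then show ?thesis by (intro bigoI)
qed

lemma asym:
  assumes sys: "s_system_sol x tc s2 s3 s4"
  defines "al \<equiv> 1 / (1 - (x tc)^2)" and "be \<equiv> g tc"
  shows "s2 \<sim>[at_left tc] (\<lambda>t. al / (tc - t))
       \<and> s3 \<sim>[at_left tc] (\<lambda>t. be * (s2 t)^3)
       \<and> s3 \<sim>[at_left tc] (\<lambda>t. be * al^3 / (tc - t)^3)
       \<and> s4 \<sim>[at_left tc] (\<lambda>t. 3 * be^2 * (s2 t)^5)
       \<and> s4 \<sim>[at_left tc] (\<lambda>t. 3 * be^2 * al^5 / (tc - t)^5)
       \<and> (\<lambda>t. s2 t / (al * (tc - t) powi (-1)) - 1) \<in> O[at_left tc](\<lambda>t. tc - t)
       \<and> (\<lambda>t. s3 t / (be * al^3 * (tc - t) powi (-3)) - 1) \<in> O[at_left tc](\<lambda>t. tc - t)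
       \<and> (\<lambda>t. s4 t / (3 * be^2 * al^5 * (tc - t) powi (-5)) - 1) \<in> O[at_left tc](\<lambda>t. tc - t)"
proof -
  let ?F = "at_left tc" and ?h = "\<lambda>t. tc - t"
  have al: "al = 1 / a0" unfolding al_def a0_def ..
  have alpos: "0 < al" unfolding al using a0_pos by simp
  have bpos: "0 < be" unfolding be_def by (rule g_pos)
  have uq: "\<forall>t\<in>{0..<tc}. s2 t = s2 t \<and> s3 t = S3 t \<and> s4 t = S4 t" by (rule sys_uniq[OF sys sys_ex])
  have N1i: "near1 ?F ?h (\<lambda>t. inverse (al * f t / (tc - t)))"
    using near1_inverse[OF ht N1] unfolding al .
  have R2: "near1 ?F ?h (\<lambda>t. s2 t / (al * (tc - t) powi (-1)))"
  proof (rule near1_cong[OF N1i])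
    show "eventually (\<lambda>t. inverse (al * f t / (tc - t)) = s2 t / (al * (tc - t) powi (-1))) ?F"
      using evF
    proof eventually_elim
      case (elim t)
      then have tau: "0 < tc - t" and t1: "t \<in> {0..<tc}" by auto
      have fp: "0 < f t" by (rule f_pos[OF t1])
      have s2e: "s2 t = 1 / f t" by (simp add: f_eq[OF t1])
      show ?case unfolding s2e using tau fp alpos by (simp add: powi_m1 field_simps)
    qed
  qed
  have R3: "near1 ?F ?h (\<lambda>t. s3 t / (be * al^3 * (tc - t) powi (-3)))"
  proof (rule near1_cong[OF near1_mult[OF ht Ng near1_power[OF ht N1i, of 3]]])
    show "eventually (\<lambda>t. g t / g tc * (inverse (al * f t / (tc - t)))^3 = s3 t / (be * al^3 * (tc - t) powi (-3))) ?F"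
      using evF
    proof eventually_elim
      case (elim t)
      then have tau: "0 < tc - t" and t1: "t \<in> {0..<tc}" by auto
      have fp: "0 < f t" by (rule f_pos[OF t1])
      have "s3 t = g t / (f t)^3" using uq t1 by (simp add: S3_def)
      then show ?case using tau fp alpos bpos unfolding be_def by (simp add: powi_m3 field_simps)
    qed
  qed
  have R4: "near1 ?F ?h (\<lambda>t. s4 t / (3 * be^2 * al^5 * (tc - t) powi (-5)))"
  proof (rule near1_cong[OF near1_mult[OF ht near1_add[OF near1_power[OF ht Ng, of 2] Ok] near1_power[OF ht N1i, of 5]]])
    show "eventually (\<lambda>t. ((g t / g tc)^2 + kk t * f t / (3 * (g tc)^2)) * (inverse (al * f t / (tc - t)))^5
        = s4 t / (3 * be^2 * al^5 * (tc - t) powi (-5))) ?F"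
      using evF
    proof eventually_elim
      case (elim t)
      then have tau: "0 < tc - t" and t1: "t \<in> {0..<tc}" by auto
      have fp: "0 < f t" by (rule f_pos[OF t1])
      have s4e: "s4 t = (kk t + 3 * (g t)^2 / f t) / (f t)^4" using uq t1 by (simp add: S4_def)
      have p5: "(f t)^5 = f t * (f t)^4" by (simp add: power_Suc[symmetric])
      show ?case unfolding s4e using tau fp alpos bpos p5 unfolding be_def by (simp add: powi_m5 field_simps)
    qed
  qed
  have E2: "s2 \<sim>[?F] (\<lambda>t. al / (tc - t))"
  proof (rule asymp_equivI')
    have lim: "((\<lambda>t. s2 t / (al * (tc - t) powi (-1))) \<longlongrightarrow> 1) ?F" by (rule near1_tendsto[OF ht R2])
    have "eventually (\<lambda>t. s2 t / (al * (tc - t) powi (-1)) = s2 t / (al / (tc - t))) ?F"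
      unfolding pw1 by simp
    from tendsto_cong[OF this, THEN iffD1, OF lim] show "((\<lambda>t. s2 t / (al / (tc - t))) \<longlongrightarrow> 1) ?F" .
  qed
  have E3: "s3 \<sim>[?F] (\<lambda>t. be * al^3 / (tc - t)^3)"
  proof (rule asymp_equivI')
    have lim: "((\<lambda>t. s3 t / (be * al^3 * (tc - t) powi (-3))) \<longlongrightarrow> 1) ?F" by (rule near1_tendsto[OF ht R3])
    have "eventually (\<lambda>t. s3 t / (be * al^3 * (tc - t) powi (-3)) = s3 t / (be * al^3 / (tc - t)^3)) ?F"
      unfolding pw3 by simp
    from tendsto_cong[OF this, THEN iffD1, OF lim] show "((\<lambda>t. s3 t / (be * al^3 / (tc - t)^3)) \<longlongrightarrow> 1) ?F" .
  qed
  have E4: "s4 \<sim>[?F] (\<lambda>t. 3 * be^2 * al^5 / (tc - t)^5)"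
  proof (rule asymp_equivI')
    have lim: "((\<lambda>t. s4 t / (3 * be^2 * al^5 * (tc - t) powi (-5))) \<longlongrightarrow> 1) ?F" by (rule near1_tendsto[OF ht R4])
    have "eventually (\<lambda>t. s4 t / (3 * be^2 * al^5 * (tc - t) powi (-5)) = s4 t / (3 * be^2 * al^5 / (tc - t)^5)) ?F"
      unfolding pw5 by simp
    from tendsto_cong[OF this, THEN iffD1, OF lim] show "((\<lambda>t. s4 t / (3 * be^2 * al^5 / (tc - t)^5)) \<longlongrightarrow> 1) ?F" .
  qed
  have P3: "(\<lambda>t. be * (s2 t)^3) \<sim>[?F] (\<lambda>t. be * (al / (tc - t))^3)"
    by (rule asymp_equiv_mult[OF asymp_equiv_refl asymp_equiv_power[OF E2]])
  have P5: "(\<lambda>t. 3 * be^2 * (s2 t)^5) \<sim>[?F] (\<lambda>t. 3 * be^2 * (al / (tc - t))^5)"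
    by (rule asymp_equiv_mult[OF asymp_equiv_refl asymp_equiv_power[OF E2]])
  have q3: "(\<lambda>t. be * (al / (tc - t))^3) = (\<lambda>t. be * al^3 / (tc - t)^3)" by (simp add: power_divide)
  have q5: "(\<lambda>t. 3 * be^2 * (al / (tc - t))^5) = (\<lambda>t. 3 * be^2 * al^5 / (tc - t)^5)" by (simp add: power_divide)
  have E3': "s3 \<sim>[?F] (\<lambda>t. be * (s2 t)^3)"
    using asymp_equiv_trans[OF E3 asymp_equiv_symI[OF P3[unfolded q3]]] .
  have E5': "s4 \<sim>[?F] (\<lambda>t. 3 * be^2 * (s2 t)^5)"
    using asymp_equiv_trans[OF E4 asymp_equiv_symI[OF P5[unfolded q5]]] .
  show ?thesis using E2 E3' E3 E5' E4 R2 R3 R4 unfolding near1_def by blast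
qed

end

theorem theorem3p1:
  fixes x s2 f g :: "real \<Rightarrow> real" and tc \<alpha> \<beta> :: real
  assumes x_ode: "xbar_ode x"
    and x_range: "\<forall>t\<ge>0. 0 < x t \<and> x t \<le> 1"
    and tc_pos: "0 < tc"
    and s2: "s2_sol x tc s2"
    and s2_explodes: "filterlim s2 at_top (at_left tc)"
    and f: "f_sol x tc f"
    and g: "g_sol x f tc g"
    and \<alpha>_def: "\<alpha> = 1 / (1 - (x tc)^2)"
    and \<beta>_def: "\<beta> = g tc"
  shows "(\<exists>s3 s4. s_system_sol x tc s2 s3 s4)
    \<and> (\<forall>a2 a3 a4 b2 b3 b4. s_system_sol x tc a2 a3 a4 \<longrightarrow> s_system_sol x tc b2 b3 b4 \<longrightarrow>
          (\<forall>t\<in>{0..<tc}. a2 t = b2 t \<and> a3 t = b3 t \<and> a4 t = b4 t))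
    \<and> 0 < \<alpha> \<and> 0 < \<beta>
    \<and> (\<forall>s3 s4. s_system_sol x tc s2 s3 s4 \<longrightarrow>
         s2 \<sim>[at_left tc] (\<lambda>t. \<alpha> / (tc - t))
       \<and> s3 \<sim>[at_left tc] (\<lambda>t. \<beta> * (s2 t)^3)
       \<and> s3 \<sim>[at_left tc] (\<lambda>t. \<beta> * \<alpha>^3 / (tc - t)^3)
       \<and> s4 \<sim>[at_left tc] (\<lambda>t. 3 * \<beta>^2 * (s2 t)^5)
       \<and> s4 \<sim>[at_left tc] (\<lambda>t. 3 * \<beta>^2 * \<alpha>^5 / (tc - t)^5)
       \<and> (\<lambda>t. s2 t / (\<alpha> * (tc - t) powi (-1)) - 1) \<in> O[at_left tc](\<lambda>t. tc - t)
       \<and> (\<lambda>t. s3 t / (\<beta> * \<alpha>^3 * (tc - t) powi (-3)) - 1) \<in> O[at_left tc](\<lambda>t. tc - t)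
       \<and> (\<lambda>t. s4 t / (3 * \<beta>^2 * \<alpha>^5 * (tc - t) powi (-5)) - 1) \<in> O[at_left tc](\<lambda>t. tc - t))"
  proof -
  interpret sett x s2 f g tc
    by (unfold_locales) (use x_ode x_range tc_pos s2 s2_explodes f g in auto)
  have c1: "\<exists>s3 s4. s_system_sol x tc s2 s3 s4" using sys_ex by blast
  have c2: "\<forall>a2 a3 a4 b2 b3 b4. s_system_sol x tc a2 a3 a4 \<longrightarrow> s_system_sol x tc b2 b3 b4 \<longrightarrow>
          (\<forall>t\<in>{0..<tc}. a2 t = b2 t \<and> a3 t = b3 t \<and> a4 t = b4 t)"
  proof (intro allI impI)
    fix a2 a3 a4 b2 b3 b4
    assume "s_system_sol x tc a2 a3 a4" "s_system_sol x tc b2 b3 b4"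
    then show "\<forall>t\<in>{0..<tc}. a2 t = b2 t \<and> a3 t = b3 t \<and> a4 t = b4 t" by (rule sys_uniq)
  qed
  have c3: "0 < \<alpha>" using a0_pos unfolding \<alpha>_def a0_def by simp
  have c4: "0 < \<beta>" using g_pos unfolding \<beta>_def by simp
  have c5: "\<forall>s3 s4. s_system_sol x tc s2 s3 s4 \<longrightarrow>
         s2 \<sim>[at_left tc] (\<lambda>t. \<alpha> / (tc - t))
       \<and> s3 \<sim>[at_left tc] (\<lambda>t. \<beta> * (s2 t)^3)
       \<and> s3 \<sim>[at_left tc] (\<lambda>t. \<beta> * \<alpha>^3 / (tc - t)^3)
       \<and> s4 \<sim>[at_left tc] (\<lambda>t. 3 * \<beta>^2 * (s2 t)^5)
       \<and> s4 \<sim>[at_left tc] (\<lambda>t. 3 * \<beta>^2 * \<alpha>^5 / (tc - t)^5)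
       \<and> (\<lambda>t. s2 t / (\<alpha> * (tc - t) powi (-1)) - 1) \<in> O[at_left tc](\<lambda>t. tc - t)
       \<and> (\<lambda>t. s3 t / (\<beta> * \<alpha>^3 * (tc - t) powi (-3)) - 1) \<in> O[at_left tc](\<lambda>t. tc - t)
       \<and> (\<lambda>t. s4 t / (3 * \<beta>^2 * \<alpha>^5 * (tc - t) powi (-5)) - 1) \<in> O[at_left tc](\<lambda>t. tc - t)"
  proof (intro allI impI)
    fix s3 s4 assume sys: "s_system_sol x tc s2 s3 s4"
    show "s2 \<sim>[at_left tc] (\<lambda>t. \<alpha> / (tc - t))
       \<and> s3 \<sim>[at_left tc] (\<lambda>t. \<beta> * (s2 t)^3)
       \<and> s3 \<sim>[at_left tc] (\<lambda>t. \<beta> * \<alpha>^3 / (tc - t)^3)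
       \<and> s4 \<sim>[at_left tc] (\<lambda>t. 3 * \<beta>^2 * (s2 t)^5)
       \<and> s4 \<sim>[at_left tc] (\<lambda>t. 3 * \<beta>^2 * \<alpha>^5 / (tc - t)^5)
       \<and> (\<lambda>t. s2 t / (\<alpha> * (tc - t) powi (-1)) - 1) \<in> O[at_left tc](\<lambda>t. tc - t)
       \<and> (\<lambda>t. s3 t / (\<beta> * \<alpha>^3 * (tc - t) powi (-3)) - 1) \<in> O[at_left tc](\<lambda>t. tc - t)
       \<and> (\<lambda>t. s4 t / (3 * \<beta>^2 * \<alpha>^5 * (tc - t) powi (-5)) - 1) \<in> O[at_left tc](\<lambda>t. tc - t)"
      unfolding \<alpha>_def \<beta>_def by (rule asym[OF sys])
  qed
  show ?thesis by (intro conjI) (rule c1, rule c2, rule c3, rule c4, rule c5)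
qed

end
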